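(* Let $\psi : [0,\infty) \to [0,\infty)$ be a measurable function such that $0 < 1/c_d := \int_0^\infty u^d \psi(u)\,{\rm d}u < \infty$ for all integers $d \ge 1$, and assume $\psi$ does not have compact support. Assume there is $u_\ddagger$ such that on $[u_\ddagger, \infty)$ the function $\Lambda(u) := -\log \psi(u)$ is differentiable and $L(u) := u \Lambda'(u)$ is increasing; that $M(u) := L(u)/\log u \to \infty$ as $u \to \infty$; and that for every $\varepsilon \in (0,1)$, $\limsup_{u\to\infty} M((1-\varepsilon)u)/M(u) \le 1$ and $\liminf_{u\to\infty} M((1+\varepsilon)u)/M(u) \ge 1$. Let $u_d := L^{-1}(d)$. Assume further that $L$ is differentiable, that $\nu_d := u_d L'(u_d) \to \infty$ as $d\to\infty$, and that there is a sequence $\omega_d \to \infty$ such that $$\big|L(u_d) - L((1-\varepsilon)u_d) - \varepsilon u_d L'(u_d)\big| \le |\varepsilon|\,\nu_d/\omega_d \quad \text{whenever } \varepsilon^2 \le \omega_d/\nu_d.$$ Then $$\frac{1}{c_d} \sim \sqrt{\frac{2\pi}{\nu_d}}\; u_d^{d+1}\,\psi(u_d), \quad d \to \infty.$$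
   Context: $L^{-1}$ denotes the inverse of the increasing function $L$ on $[u_\ddagger,\infty)$, so $L(u_d)=d$ for $d$ large. $a_d \sim b_d$ means $a_d/b_d \to 1$. *)

theory Defs
  imports "HOL-Analysis.Analysis" "HOL-Library.Landau_Symbols"
begin

end

theory Submission
  imports Defs "HOL-Probability.Probability" "HOL-Real_Asymp.Real_Asymp"
begin

lemma incr_deriv:
  fixes G G' :: "real \<Rightarrow> real"
  assumes "a \<le> b" "\<And>y. a \<le> y \<Longrightarrow> y \<le> b \<Longrightarrow> (G has_real_derivative G' y) (at y)"
    "\<And>y. a \<le> y \<Longrightarrow> y \<le> b \<Longrightarrow> G' y \<ge> 0"
  shows "G a \<le> G b"
proof (rule DERIV_nonneg_imp_increasing_open[OF assms(1)])
  show "\<exists>y. (G has_real_derivative y) (at x) \<and> 0 \<le> y" if "a < x" "x < b" for x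
    using assms that by force
  show "continuous_on {a..b} G"
    using assms(2) by (intro continuous_at_imp_continuous_on ballI) (meson DERIV_isCont atLeastAtMost_iff)
qed

lemma deriv_bound:
  fixes G G' :: "real \<Rightarrow> real"
  assumes "\<And>y. min x z \<le> y \<Longrightarrow> y \<le> max x z \<Longrightarrow> (G has_real_derivative G' y) (at y)"
    "\<And>y. min x z \<le> y \<Longrightarrow> y \<le> max x z \<Longrightarrow> \<bar>G' y\<bar> \<le> B"
  shows "\<bar>G x - G z\<bar> \<le> B * \<bar>x - z\<bar>"
proof (cases x z rule: linorder_cases)
  case less
  then obtain w where w: "x < w" "w < z" "G z - G x = (z - x) * G' w"
    using MVT2[of x z G G'] assms by (auto simp: min_def max_def)
  have "\<bar>G' w\<bar> \<le> B" using assms(2)[of w] w by (auto simp: min_def max_def)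
  moreover have "\<bar>G x - G z\<bar> = \<bar>G' w\<bar> * (z - x)"
  proof -
    have "\<bar>G x - G z\<bar> = \<bar>(z - x) * G' w\<bar>" using w(3) by (simp add: abs_minus_commute)
    then show ?thesis using less by (simp add: abs_mult)
  qed
  ultimately show ?thesis using less by (simp add: mult_right_mono)
next
  case equal then show ?thesis by simp
next
  case greater
  then obtain w where w: "z < w" "w < x" "G x - G z = (x - z) * G' w"
    using MVT2[of z x G G'] assms by (auto simp: min_def max_def)
  have "\<bar>G' w\<bar> \<le> B" using assms(2)[of w] w by (auto simp: min_def max_def)
  moreover have "\<bar>G x - G z\<bar> = \<bar>G' w\<bar> * (x - z)" using w greater
    by (simp add: abs_mult)
  ultimately show ?thesis using greater by (simp add: mult_right_mono)
qed

lemma dom_conv_seq: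
  fixes s :: "nat \<Rightarrow> real \<Rightarrow> real"
  assumes "f \<in> borel_measurable lborel" "\<And>i. s i \<in> borel_measurable lborel" "integrable lborel w"
    "\<And>x. (\<lambda>i. s i x) \<longlonglongrightarrow> f x" "eventually (\<lambda>i. \<forall>x. \<bar>s i x\<bar> \<le> w x) sequentially"
  shows "(\<lambda>i. integral\<^sup>L lborel (s i)) \<longlonglongrightarrow> integral\<^sup>L lborel f"
proof -
  obtain N where N: "\<And>i. i \<ge> N \<Longrightarrow> \<forall>x. \<bar>s i x\<bar> \<le> w x"
    using assms(5) by (auto simp: eventually_sequentially)
  have "(\<lambda>i. integral\<^sup>L lborel (s (i + N))) \<longlonglongrightarrow> integral\<^sup>L lborel f"
  proof (rule integral_dominated_convergence[where w=w])
    show "AE x in lborel. (\<lambda>i. s (i + N) x) \<longlonglongrightarrow> f x"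
      using assms(4) by (intro AE_I2) (rule LIMSEQ_ignore_initial_segment)
    show "AE x in lborel. norm (s (i + N) x) \<le> w x" for i
      using N[of "i+N"] by auto
  qed (use assms in auto)
  then show ?thesis by (rule LIMSEQ_offset)
qed

lemma gauss_int: "(\<integral>x. exp (- x\<^sup>2 / 2) \<partial>lborel) = sqrt (2 * pi)"
proof -
  have "(\<integral>x. exp (- x\<^sup>2 / 2) \<partial>lborel) = (\<integral>x. sqrt (2*pi) * std_normal_density x \<partial>lborel)"
    by (simp add: std_normal_density_def)
  also have "\<dots> = sqrt (2*pi)" by simp
  finally show ?thesis .
qed

lemma gauss_int4: "integrable lborel (\<lambda>x::real. exp (- x\<^sup>2 / 4))"
proof -
  have "integrable lborel (\<lambda>x. sqrt (4*pi) * normal_density 0 (sqrt 2) x)" by simp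
  moreover have "(\<lambda>x. sqrt (4*pi) * normal_density 0 (sqrt 2) x) = (\<lambda>x. exp (- x\<^sup>2 / 4))"
    by (auto simp: normal_density_def real_sqrt_mult)
  ultimately show ?thesis by simp
qed

lemma cdb:
  fixes u y x nu ww D :: real
  assumes u: "u > 0" and ww: "ww > 0" and nu: "nu > 0" and y: "y \<ge> u/2" and yx: "\<bar>u - y\<bar> \<le> \<bar>u - x\<bar>"
    and D0: "\<bar>D - (1 - y/u) * nu\<bar> \<le> \<bar>1 - y/u\<bar> * nu / ww"
  shows "\<bar>D/y + nu*(y-u)/u^2\<bar> \<le> 2*nu*(x-u)^2/u^3 + 2*\<bar>x-u\<bar>*nu/(u^2*ww)"
proof -
  have D: "\<bar>D - nu*(1 - y/u)\<bar> \<le> \<bar>1 - y/u\<bar> * nu / ww" using D0 by (simp add: mult.commute)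
  have yp: "y > 0" using u y by simp
  have eq: "D/y + nu*(y-u)/u^2 = nu*(u-y)^2/(u^2*y) + (D - nu*(1-y/u))/y"
    using u yp by (simp add: field_simps power2_eq_square)
  have sq: "(u-y)^2 \<le> (x-u)^2"
  proof -
    have "\<bar>u-y\<bar>^2 \<le> \<bar>x-u\<bar>^2" using yx by (intro power_mono) (auto simp: abs_minus_commute)
    then show ?thesis by simp
  qed
  have b1: "nu*(u-y)^2/(u^2*y) \<le> 2*nu*(x-u)^2/u^3"
  proof -
    have "nu*(u-y)^2/(u^2*y) \<le> nu*(x-u)^2/(u^2*y)"
      using sq nu u yp by (intro divide_right_mono mult_left_mono) auto
    also have "\<dots> \<le> nu*(x-u)^2/(u^2*(u/2))"
      using u yp y nu by (intro divide_left_mono mult_left_mono) auto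
    also have "\<dots> = 2*nu*(x-u)^2/u^3" using u by (simp add: field_simps power3_eq_cube power2_eq_square)
    finally show ?thesis .
  qed
  have b2: "\<bar>(D - nu*(1-y/u))/y\<bar> \<le> 2*\<bar>x-u\<bar>*nu/(u^2*ww)"
  proof -
    have e1: "\<bar>1 - y/u\<bar> = \<bar>u - y\<bar>/u" using u by (simp add: field_simps abs_div)
    have "\<bar>(D - nu*(1-y/u))/y\<bar> = \<bar>D - nu*(1-y/u)\<bar>/y" using yp by simp
    also have "\<dots> \<le> (\<bar>1 - y/u\<bar> * nu / ww)/y" using D yp by (intro divide_right_mono) auto
    also have "\<dots> \<le> (\<bar>x - u\<bar>/u * nu / ww)/y" unfolding e1 using yx u nu ww yp
      by (intro divide_right_mono mult_right_mono divide_right_mono) (auto simp: abs_minus_commute)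
    also have "\<dots> \<le> (\<bar>x - u\<bar>/u * nu / ww)/(u/2)" using yp y u nu ww
      by (intro divide_left_mono) auto
    also have "\<dots> = 2*\<bar>x-u\<bar>*nu/(u^2*ww)" using u ww by (simp add: field_simps power2_eq_square)
    finally show ?thesis .
  qed
  have "\<bar>D/y + nu*(y-u)/u^2\<bar> \<le> \<bar>nu*(u-y)^2/(u^2*y)\<bar> + \<bar>(D - nu*(1-y/u))/y\<bar>"
    unfolding eq by (rule abs_triangle_ineq)
  also have "\<bar>nu*(u-y)^2/(u^2*y)\<bar> = nu*(u-y)^2/(u^2*y)" using nu yp by simp
  finally show ?thesis using b1 b2 by linarith
qed

lemma quad_bound:
  fixes A t ww q :: real
  assumes "\<bar>A + t\<^sup>2/2\<bar> \<le> 2*t\<^sup>2/ww + 2*\<bar>t\<bar>^3/q" "ww \<ge> 16" "q > 0" "\<bar>t\<bar> \<le> q/16"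
  shows "A \<le> -t\<^sup>2/4"
proof -
  have "2*t\<^sup>2/ww \<le> 2*t\<^sup>2/16" using assms by (intro divide_left_mono) auto
  moreover have "2*\<bar>t\<bar>^3/q \<le> t\<^sup>2/8"
  proof -
    have "2*\<bar>t\<bar>^3/q = 2*t\<^sup>2*(\<bar>t\<bar>/q)" by (simp add: power2_eq_square power3_eq_cube)
    also have "\<dots> \<le> 2*t\<^sup>2*(1/16)" using assms by (intro mult_left_mono) (auto simp: field_simps)
    finally show ?thesis by simp
  qed
  ultimately show ?thesis using assms(1) by linarith
qed

lemma set_int_nonneg:
  fixes f :: "real \<Rightarrow> real"
  assumes "\<And>x. x \<in> A \<Longrightarrow> 0 \<le> f x"
  shows "0 \<le> (LBINT x:A. f x)"
  unfolding set_lebesgue_integral_def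
  by (intro integral_nonneg_AE AE_I2) (use assms in \<open>auto simp: indicator_def\<close>)

lemma powr_val:
  fixes E x k :: real assumes "x > 0" "k>1"
  shows "E * x powr k * (- (x powr (- k + 1)) / (- k + 1)) = E * x / (k - 1)"
proof -
  have pw: "x powr k * x powr (- k + 1) = x" using assms by (simp add: powr_add[symmetric])
  have "E * x powr k * (- (x powr (- k + 1)) / (- k + 1)) = E * (x powr k * x powr (- k + 1)) / (k - 1)"
    using assms by (simp add: divide_simps) (simp add: algebra_simps)
  then show ?thesis using pw by simp
qed


theorem proposition2:
  fixes \<psi> :: "real \<Rightarrow> real"
    and u\<^sub>d\<^sub>d :: real
    and \<Lambda>' :: "real \<Rightarrow> real"
    and L' :: "real \<Rightarrow> real"
    and u :: "nat \<Rightarrow> real"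
    and \<omega> :: "nat \<Rightarrow> real"
  defines "\<Lambda> \<equiv> (\<lambda>x. - ln (\<psi> x))"
    and "L \<equiv> (\<lambda>x. x * \<Lambda>' x)"
    and "M \<equiv> (\<lambda>x. (x * \<Lambda>' x) / ln x)"
    and "\<nu> \<equiv> (\<lambda>d. u d * L' (u d))"
  assumes psi_meas: "set_borel_measurable lborel {0..} \<psi>"
    and psi_nonneg: "\<forall>x\<ge>0. \<psi> x \<ge> 0"
    and moments_int: "\<forall>d::nat\<ge>1. set_integrable lborel {0..} (\<lambda>x. x ^ d * \<psi> x)"
    and moments_pos: "\<forall>d::nat\<ge>1. 0 < (LBINT x:{0..}. x ^ d * \<psi> x)"
    and not_compact_supp: "\<not> compact (closure {x\<in>{0..}. \<psi> x \<noteq> 0})"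
    and psi_pos: "\<forall>x\<ge>u\<^sub>d\<^sub>d. \<psi> x > 0"
    and Lambda_deriv: "\<forall>x\<ge>u\<^sub>d\<^sub>d. (\<Lambda> has_real_derivative \<Lambda>' x) (at x within {u\<^sub>d\<^sub>d..})"
    and L_mono: "mono_on {u\<^sub>d\<^sub>d..} L"
    and M_lim: "filterlim M at_top at_top"
    and M_limsup: "\<forall>\<epsilon>. 0 < \<epsilon> \<and> \<epsilon> < 1 \<longrightarrow>
        Limsup at_top (\<lambda>x. ereal (M ((1 - \<epsilon>) * x) / M x)) \<le> 1"
    and M_liminf: "\<forall>\<epsilon>. 0 < \<epsilon> \<and> \<epsilon> < 1 \<longrightarrow>
        Liminf at_top (\<lambda>x. ereal (M ((1 + \<epsilon>) * x) / M x)) \<ge> 1"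
    and u_def: "eventually (\<lambda>d. u d \<ge> u\<^sub>d\<^sub>d \<and> L (u d) = real d) sequentially"
    and L_deriv: "\<forall>x\<ge>u\<^sub>d\<^sub>d. (L has_real_derivative L' x) (at x within {u\<^sub>d\<^sub>d..})"
    and nu_lim: "filterlim \<nu> at_top sequentially"
    and omega_lim: "filterlim \<omega> at_top sequentially"
    and local_cond: "eventually (\<lambda>d. \<forall>\<epsilon>::real. \<epsilon>\<^sup>2 \<le> \<omega> d / \<nu> d \<longrightarrow>
        \<bar>L (u d) - L ((1 - \<epsilon>) * u d) - \<epsilon> * u d * L' (u d)\<bar> \<le> \<bar>\<epsilon>\<bar> * \<nu> d / \<omega> d) sequentially"
  shows "(\<lambda>d. LBINT x:{0..}. x ^ d * \<psi> x)
           \<sim>[sequentially] (\<lambda>d. sqrt (2 * pi / \<nu> d) * u d ^ (d + 1) * \<psi> (u d))"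
proof -
  define a where "a = max (u\<^sub>d\<^sub>d + 1) 1"
  define b where "b = 2 * a"
  have a1: "a > u\<^sub>d\<^sub>d" "a \<ge> 1" "b \<ge> a" "b > u\<^sub>d\<^sub>d" "a > 0" "b > 0"
    unfolding a_def b_def by (auto simp: max_def)
  have Lmono: "\<And>y z. u\<^sub>d\<^sub>d \<le> y \<Longrightarrow> y \<le> z \<Longrightarrow> L y \<le> L z"
    using L_mono by (auto intro: mono_onD)
  define F where "F = (\<lambda>(d::nat) (y::real). real d * ln y + ln (\<psi> y))"
  have psi_pos': "\<And>y. y \<ge> a \<Longrightarrow> \<psi> y > 0" using psi_pos a1 by auto
  have F_deriv: "(F d has_real_derivative (real d - L y) / y) (at y)" if y: "y \<ge> a" for d y
  proof -
    have "(\<Lambda> has_real_derivative \<Lambda>' y) (at y)"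
      using Lambda_deriv[rule_format, of y] y a1 at_within_interior[of y "{u\<^sub>d\<^sub>d..}"] by auto
    then have "((\<lambda>y. real d * ln y - \<Lambda> y) has_real_derivative real d * (1/y) - \<Lambda>' y) (at y)"
      using y a1 by (auto intro!: derivative_eq_intros)
    moreover have "F d = (\<lambda>y. real d * ln y - \<Lambda> y)" unfolding F_def \<Lambda>_def by auto
    moreover have "real d * (1/y) - \<Lambda>' y = (real d - L y)/y" using y a1 unfolding L_def by (simp add: field_simps)
    ultimately show ?thesis by simp
  qed
  have expF: "exp (F d y) = y ^ d * \<psi> y" if "y \<ge> a" for d y
    using psi_pos'[OF that] a1 that by (simp add: F_def exp_add exp_of_nat_mult)
  have u_top: "filterlim u at_top sequentially"
  proof (subst filterlim_at_top, intro allI)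
    fix B :: real
    define B' where "B' = max B u\<^sub>d\<^sub>d"
    obtain N :: nat where N: "real N > L B'" using reals_Archimedean2 by blast
    have "eventually (\<lambda>d. d \<ge> N) sequentially" by (rule eventually_ge_at_top)
    then show "eventually (\<lambda>d. u d \<ge> B) sequentially"
      using u_def
    proof eventually_elim
      case (elim d)
      show ?case
      proof (rule ccontr)
        assume "\<not> u d \<ge> B"
        then have "u d \<le> B'" unfolding B'_def by auto
        then have "L (u d) \<le> L B'" using Lmono[of "u d" B'] elim by auto
        then show False using elim N by auto
      qed
    qed
  qed
  define S where "S = (\<lambda>d. min (sqrt (\<omega> d)) (sqrt (\<nu> d) / 16))"
  have S_top: "filterlim S at_top sequentially"
  proof (subst filterlim_at_top, intro allI)
    fix Z :: real
    have "eventually (\<lambda>d. \<omega> d \<ge> Z\<^sup>2) sequentially" using omega_lim by (simp add: filterlim_at_top)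
    moreover have "eventually (\<lambda>d. \<nu> d \<ge> (16*Z)\<^sup>2) sequentially" using nu_lim by (simp add: filterlim_at_top)
    ultimately show "eventually (\<lambda>d. Z \<le> S d) sequentially"
    proof eventually_elim
      case (elim d)
      have "sqrt (\<omega> d) \<ge> \<bar>Z\<bar>" using elim real_sqrt_le_mono[OF elim(1)] by simp
      moreover have "sqrt (\<nu> d) \<ge> \<bar>16*Z\<bar>" using real_sqrt_le_mono[OF elim(2)] by (simp only: real_sqrt_abs)
      ultimately show ?case unfolding S_def by auto
    qed
  qed
  define good where "good = (\<lambda>d. u d \<ge> u\<^sub>d\<^sub>d \<and> L (u d) = real d \<and> u d \<ge> 4*b \<and> \<nu> d > 0 \<and> \<omega> d \<ge> 16 \<and> S d \<ge> 8 \<and> d \<ge> 1 \<and> (\<forall>\<epsilon>::real. \<epsilon>\<^sup>2 \<le> \<omega> d / \<nu> d \<longrightarrow>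
        \<bar>L (u d) - L ((1 - \<epsilon>) * u d) - \<epsilon> * u d * L' (u d)\<bar> \<le> \<bar>\<epsilon>\<bar> * \<nu> d / \<omega> d))"
  have ev_good: "eventually good sequentially"
  proof -
    have e1: "eventually (\<lambda>d. u d \<ge> 4*b) sequentially" using u_top by (simp add: filterlim_at_top)
    have e2: "eventually (\<lambda>d. \<nu> d \<ge> 1) sequentially" using nu_lim by (simp add: filterlim_at_top)
    have e3: "eventually (\<lambda>d. \<omega> d \<ge> 16) sequentially" using omega_lim by (simp add: filterlim_at_top)
    have e4: "eventually (\<lambda>d. S d \<ge> 8) sequentially" using S_top by (simp add: filterlim_at_top)
    have e5: "eventually (\<lambda>d::nat. d \<ge> 1) sequentially" by (rule eventually_ge_at_top)
    show ?thesis using u_def local_cond e1 e2 e3 e4 e5 unfolding good_def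
      by eventually_elim auto
  qed
  define \<delta> where "\<delta> = (\<lambda>d. S d / sqrt (\<nu> d))"
  define k where "k = (\<lambda>d. S d * sqrt (\<nu> d) / 2)"
  define E where "E = (\<lambda>d. u d ^ d * \<psi> (u d))"
  define N where "N = (\<lambda>d. E d * u d / sqrt (\<nu> d))"
  define y1 where "y1 = (\<lambda>d. (1 - \<delta> d) * u d)"
  define x1 where "x1 = (\<lambda>d. (1 + \<delta> d) * u d)"
  define c where "c = (\<lambda>d. u d / sqrt (\<nu> d))"
  define I where "I = (\<lambda>d::nat. LBINT x:{0..}. x ^ d * \<psi> x)"
  define P0 where "P0 = (\<lambda>d::nat. LBINT x:{0..<a}. x ^ d * \<psi> x)"
  define P1 where "P1 = (\<lambda>d::nat. LBINT x:{a..y1 d}. x ^ d * \<psi> x)"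
  define P2 where "P2 = (\<lambda>d::nat. LBINT x:{y1 d<..<x1 d}. x ^ d * \<psi> x)"
  define P3 where "P3 = (\<lambda>d::nat. LBINT x:{x1 d..}. x ^ d * \<psi> x)"
  define s where "s = (\<lambda>(d::nat) t. indicator {-S d<..<S d} t * (indicator {0..} (u d + c d * t) * \<psi> (u d + c d * t)) * (u d + c d * t) ^ d / E d)"
  define J where "J = (LBINT x:{0..}. x * \<psi> x)"
  define K0 where "K0 = 2 * J / (a * \<psi> b)"
  define C where "C = \<bar>L a\<bar>"
  have per_d: "I d = P0 d + P1 d + P2 d + P3 d \<and> 0 \<le> P0 d / N d \<and> P0 d / N d \<le> K0 * ((real d + C) / 2^d)
      \<and> 0 \<le> P1 d / N d \<and> P1 d / N d \<le> 2 / S d \<and> 0 \<le> P3 d / N d \<and> P3 d / N d \<le> 8 / S d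
      \<and> P2 d / N d = integral\<^sup>L lborel (s d) \<and> (\<forall>t. \<bar>s d t\<bar> \<le> exp (- t\<^sup>2 / 4))
      \<and> (\<forall>t. \<bar>t\<bar> < S d \<longrightarrow> s d t = exp (F d (u d + c d * t) - F d (u d)) \<and>
            \<bar>F d (u d + c d * t) - F d (u d) + t\<^sup>2/2\<bar> \<le> 2*t\<^sup>2/\<omega> d + 2*\<bar>t\<bar>^3/sqrt (\<nu> d))"
    if g: "good d" for d
  proof -
    from g have ug: "u d \<ge> u\<^sub>d\<^sub>d" "L (u d) = real d" "u d \<ge> 4*b" "\<nu> d > 0" "\<omega> d \<ge> 16" "S d \<ge> 8" "d \<ge> 1"
      and lc: "\<And>\<epsilon>. \<epsilon>\<^sup>2 \<le> \<omega> d / \<nu> d \<Longrightarrow> \<bar>L (u d) - L ((1 - \<epsilon>) * u d) - \<epsilon> * u d * L' (u d)\<bar> \<le> \<bar>\<epsilon>\<bar> * \<nu> d / \<omega> d"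
      unfolding good_def by auto
    have upos: "u d > 0" "u d \<ge> 1" "u d \<ge> a" "u d \<ge> b" using ug a1 by auto
    define q where "q = sqrt (\<nu> d)"
    have q: "q > 0" "\<nu> d = q\<^sup>2" unfolding q_def using ug by auto
    have S_le: "S d \<le> q / 16" "S d \<le> sqrt (\<omega> d)" unfolding S_def q_def by auto
    have dl: "\<delta> d = S d / q" "k d = S d * q / 2" "c d = u d / q" unfolding \<delta>_def k_def c_def q_def by auto
    have dpos: "\<delta> d > 0" "\<delta> d \<le> 1/16"
    proof -
      show "\<delta> d > 0" using dl ug q by simp
      have "S d / q \<le> (q/16)/q" using S_le q by (intro divide_right_mono) auto
      then show "\<delta> d \<le> 1/16" using dl q by simp
    qed
    have d2: "(\<delta> d)\<^sup>2 \<le> \<omega> d / \<nu> d"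
    proof -
      have "(S d)\<^sup>2 \<le> (sqrt (\<omega> d))\<^sup>2" using S_le ug by (intro power_mono) auto
      then have "(S d)\<^sup>2 \<le> \<omega> d" using ug by simp
      then show ?thesis using q dl by (simp add: power_divide divide_right_mono)
    qed
    have kd: "k d = \<delta> d * \<nu> d / 2" using dl q by (simp add: power2_eq_square)
    have qbig: "q \<ge> 128" using S_le ug by auto
    have kbig: "k d \<ge> 2"
    proof -
      have "8 * 128 \<le> S d * q" using ug qbig by (intro mult_mono) auto
      then show ?thesis using dl by simp
    qed
    have kp: "k d + 1 > 0" "k d - 1 > 0" "k d > 0" using kbig by auto
    have cS: "\<delta> d * u d = c d * S d" using dl q by simp
    have cpos: "c d > 0" using dl q upos by simp
    have Lloc: "\<bar>real d - L y - (1 - y / u d) * \<nu> d\<bar> \<le> \<bar>1 - y / u d\<bar> * \<nu> d / \<omega> d"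
      if y: "\<bar>y - u d\<bar> \<le> \<delta> d * u d" for y
    proof -
      define \<epsilon> where "\<epsilon> = 1 - y / u d"
      have "\<bar>\<epsilon>\<bar> = \<bar>y - u d\<bar> / u d" unfolding \<epsilon>_def using upos by (simp add: field_simps abs_div abs_minus_commute)
      also have "\<dots> \<le> \<delta> d" using y upos by (simp add: divide_le_eq)
      finally have "\<bar>\<epsilon>\<bar> \<le> \<delta> d" .
      then have "\<epsilon>\<^sup>2 \<le> (\<delta> d)\<^sup>2" by (metis abs_le_square_iff abs_of_pos dpos(1))
      with d2 have "\<epsilon>\<^sup>2 \<le> \<omega> d / \<nu> d" by linarith
      from lc[OF this] have r: "\<bar>L (u d) - L ((1 - \<epsilon>) * u d) - \<epsilon> * u d * L' (u d)\<bar> \<le> \<bar>\<epsilon>\<bar> * \<nu> d / \<omega> d" .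
      have eq1: "(1 - \<epsilon>) * u d = y" unfolding \<epsilon>_def using upos by (simp add: field_simps)
      have eq2: "\<epsilon> * u d * L' (u d) = (1 - y / u d) * \<nu> d" unfolding \<nu>_def \<epsilon>_def by (simp add: mult.assoc)
      from r have "\<bar>real d - L y - (1 - y / u d) * \<nu> d\<bar> \<le> \<bar>\<epsilon>\<bar> * \<nu> d / \<omega> d" unfolding eq1 eq2 ug(2) .
      then show ?thesis unfolding \<epsilon>_def .
    qed
    have du: "\<delta> d * u d \<le> u d / 16" "\<delta> d * u d > 0"
      using mult_right_mono[OF dpos(2), of "u d"] upos dpos by auto
    have y1e: "y1 d = u d - \<delta> d * u d" unfolding y1_def by (simp add: algebra_simps)
    have x1e: "x1 d = u d + \<delta> d * u d" unfolding x1_def by (simp add: algebra_simps)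
    have y1p: "y1 d \<ge> a" "y1 d \<ge> u d / 2" "y1 d < u d" "y1 d \<ge> b" "y1 d = u d - \<delta> d * u d"
      using du upos ug a1 y1e by linarith+
    have y1pos: "y1 d > 0" using y1p a1 by linarith
    have x1p: "x1 d > u d" "x1 d \<le> 2 * u d" "x1 d = u d + \<delta> d * u d"
      using du upos x1e by linarith+
    have Epos: "E d > 0" "E d = exp (F d (u d))" unfolding E_def using expF[of "u d" d] psi_pos' upos by auto
    have Nq: "N d = E d * u d / q" unfolding N_def q_def by simp
    have Npos: "N d > 0" "N d = c d * E d" unfolding N_def c_def using Epos upos ug by auto
    have Fincr: "F d y \<le> F d z" if "a \<le> y" "y \<le> z" "z \<le> u d" for y z
    proof (rule incr_deriv[OF that(2)])
      show "(F d has_real_derivative (real d - L w) / w) (at w)" if "y \<le> w" "w \<le> z" for w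
        using F_deriv that \<open>a \<le> y\<close> by auto
      show "0 \<le> (real d - L w) / w" if "y \<le> w" "w \<le> z" for w
        using Lmono[of w "u d"] that \<open>a \<le> y\<close> \<open>z \<le> u d\<close> a1 ug by auto
    qed
    have Fdecr: "F d z \<le> F d y" if "u d \<le> y" "y \<le> z" for y z
    proof -
      have "(\<lambda>w. - F d w) y \<le> (\<lambda>w. - F d w) z"
      proof (rule incr_deriv[OF that(2)])
        show "((\<lambda>w. - F d w) has_real_derivative - ((real d - L w) / w)) (at w)" if "y \<le> w" "w \<le> z" for w
          using F_deriv[of w d] that \<open>u d \<le> y\<close> upos by (auto intro!: derivative_eq_intros)
        show "0 \<le> - ((real d - L w) / w)" if "y \<le> w" "w \<le> z" for w
        proof -
          have "L (u d) \<le> L w" using Lmono[of "u d" w] that \<open>u d \<le> y\<close> ug by auto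
          then show ?thesis using ug that \<open>u d \<le> y\<close> upos by (simp add: divide_nonpos_pos)
        qed
      qed
      then show ?thesis by simp
    qed
    have gap1: "real d - L (y1 d) \<ge> k d"
    proof -
      have ab: "\<bar>y1 d - u d\<bar> \<le> \<delta> d * u d" using y1p dpos upos by simp
      have r1: "1 - y1 d / u d = \<delta> d" using y1e upos by (simp add: field_simps)
      from Lloc[OF ab] have "\<bar>real d - L (y1 d) - \<delta> d * \<nu> d\<bar> \<le> \<delta> d * \<nu> d / \<omega> d"
        unfolding r1 using dpos by simp
      moreover have "\<delta> d * \<nu> d / \<omega> d \<le> \<delta> d * \<nu> d / 2" using ug dpos by (intro divide_left_mono) auto
      ultimately show ?thesis using kd by linarith
    qed
    have gap2: "real d - L (x1 d) \<le> - k d"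
    proof -
      have ab: "\<bar>x1 d - u d\<bar> \<le> \<delta> d * u d" using x1p dpos upos by simp
      have r1: "1 - x1 d / u d = - \<delta> d" using x1e upos by (simp add: field_simps)
      from Lloc[OF ab] have "\<bar>real d - L (x1 d) + \<delta> d * \<nu> d\<bar> \<le> \<delta> d * \<nu> d / \<omega> d"
        unfolding r1 using dpos by simp
      moreover have "\<delta> d * \<nu> d / \<omega> d \<le> \<delta> d * \<nu> d / 2" using ug dpos by (intro divide_left_mono) auto
      ultimately show ?thesis using kd by linarith
    qed
    have kle: "k d \<le> real d + C"
    proof -
      have "L a \<le> L (y1 d)" using Lmono y1p a1 by auto
      then show ?thesis using gap1 unfolding C_def by linarith
    qed
    have tail1: "y ^ d * \<psi> y \<le> E d * y1 d powr (- k d) * y powr k d" if y: "a \<le> y" "y \<le> y1 d" for y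
    proof -
      have "(\<lambda>w. F d w - k d * ln w) y \<le> (\<lambda>w. F d w - k d * ln w) (y1 d)"
      proof (rule incr_deriv[OF y(2)])
        show "((\<lambda>w. F d w - k d * ln w) has_real_derivative (real d - L w) / w - k d * (1 / w)) (at w)"
          if "y \<le> w" "w \<le> y1 d" for w
          using F_deriv[of w d] that y a1 by (auto intro!: derivative_eq_intros)
        show "0 \<le> (real d - L w) / w - k d * (1 / w)" if "y \<le> w" "w \<le> y1 d" for w
        proof -
          have "L w \<le> L (y1 d)" using Lmono that y a1 by auto
          then have "real d - L w - k d \<ge> 0" using gap1 by linarith
          then have "0 \<le> (real d - L w - k d) / w" using that y a1 by simp
          then show ?thesis by (simp add: diff_divide_distrib)
        qed
      qed
      moreover have "F d (y1 d) \<le> F d (u d)" using Fincr[of "y1 d" "u d"] y1p by auto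
      ultimately have "F d y \<le> F d (u d) + k d * ln y - k d * ln (y1 d)" by simp
      then have "exp (F d y) \<le> exp (F d (u d) + k d * ln y - k d * ln (y1 d))" by simp
      also have "\<dots> = E d * y1 d powr (- k d) * y powr k d"
        using Epos y y1p a1 by (simp add: powr_def exp_add exp_diff exp_minus field_simps)
      finally show ?thesis using expF[of y d] y by simp
    qed
    have tail3: "y ^ d * \<psi> y \<le> E d * x1 d powr k d * y powr (- k d)" if y: "x1 d \<le> y" for y
    proof -
      have "(\<lambda>w. - (F d w + k d * ln w)) (x1 d) \<le> (\<lambda>w. - (F d w + k d * ln w)) y"
      proof (rule incr_deriv[OF y])
        show "((\<lambda>w. - (F d w + k d * ln w)) has_real_derivative - ((real d - L w) / w + k d * (1 / w))) (at w)"
          if "x1 d \<le> w" "w \<le> y" for w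
          using F_deriv[of w d] that x1p upos by (auto intro!: derivative_eq_intros)
        show "0 \<le> - ((real d - L w) / w + k d * (1 / w))" if "x1 d \<le> w" "w \<le> y" for w
        proof -
          have "L (x1 d) \<le> L w" using Lmono that x1p upos ug by auto
          then have "real d - L w + k d \<le> 0" using gap2 by linarith
          then have "(real d - L w + k d) / w \<le> 0" using that x1p upos by (simp add: divide_nonpos_pos)
          then show ?thesis by (simp add: add_divide_distrib)
        qed
      qed
      moreover have "F d (x1 d) \<le> F d (u d)" using Fdecr[of "u d" "x1 d"] x1p by auto
      ultimately have "F d y \<le> F d (u d) + k d * ln (x1 d) - k d * ln y" by simp
      then have "exp (F d y) \<le> exp (F d (u d) + k d * ln (x1 d) - k d * ln y)" by simp
      also have "\<dots> = E d * x1 d powr k d * y powr (- k d)"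
        using Epos y x1p upos by (simp add: powr_def exp_add exp_diff exp_minus field_simps)
      finally show ?thesis using expF[of y d] y x1p upos by simp
    qed
    have int0: "set_integrable lborel {0..} (\<lambda>x. x ^ d * \<psi> x)" using moments_int ug by auto
    have intsub: "set_integrable lborel A (\<lambda>x. x ^ d * \<psi> x)" if "A \<in> sets lborel" "A \<subseteq> {0..}" for A
      using set_integrable_subset[OF int0 that] .
    have decomp: "I d = P0 d + P1 d + P2 d + P3 d"
    proof -
      have U: "{0..} = {0..<a} \<union> ({a..y1 d} \<union> ({y1 d<..<x1 d} \<union> {x1 d..}))"
        using a1 y1p x1p by auto
      have i3: "(LBINT x:{y1 d<..<x1 d} \<union> {x1 d..}. x ^ d * \<psi> x) = P2 d + P3 d"
        unfolding P2_def P3_def using a1 y1p x1p by (intro set_integral_Un intsub) auto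
      have i2: "(LBINT x:{a..y1 d} \<union> ({y1 d<..<x1 d} \<union> {x1 d..}). x ^ d * \<psi> x) = P1 d + (P2 d + P3 d)"
        unfolding P1_def i3[symmetric] using a1 y1p x1p by (intro set_integral_Un intsub) auto
      have i1: "(LBINT x:{0..<a} \<union> ({a..y1 d} \<union> ({y1 d<..<x1 d} \<union> {x1 d..})). x ^ d * \<psi> x) = P0 d + (P1 d + (P2 d + P3 d))"
        unfolding P0_def i2[symmetric] using a1 y1p x1p by (intro set_integral_Un intsub) auto
      show ?thesis unfolding I_def by (subst U) (simp add: i1)
    qed
    have J0: "0 \<le> J" unfolding J_def using psi_nonneg by (intro set_int_nonneg) auto
    have int1: "set_integrable lborel {0..} (\<lambda>x. x * \<psi> x)" using moments_int by auto
    have P0le: "P0 d \<le> a ^ (d - 1) * J"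
    proof -
      have "P0 d \<le> (LBINT x:{0..<a}. a ^ (d - 1) * (x * \<psi> x))"
        unfolding P0_def
      proof (rule set_integral_mono)
        show "set_integrable lborel {0..<a} (\<lambda>x. x ^ d * \<psi> x)" by (rule intsub) auto
        show "set_integrable lborel {0..<a} (\<lambda>x. a ^ (d - 1) * (x * \<psi> x))"
          by (intro set_integrable_mult_right set_integrable_subset[OF int1]) auto
        show "x ^ d * \<psi> x \<le> a ^ (d - 1) * (x * \<psi> x)" if "x \<in> {0..<a}" for x
        proof -
          have "x ^ d = x * x ^ (d - 1)" using ug by (cases d) auto
          moreover have "x ^ (d - 1) \<le> a ^ (d - 1)" using that by (intro power_mono) auto
          ultimately have "x ^ d \<le> x * a ^ (d - 1)" using that by (simp add: mult_left_mono)
          then have "x ^ d * \<psi> x \<le> x * a ^ (d - 1) * \<psi> x" using psi_nonneg that by (simp add: mult_right_mono)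
          then show ?thesis by (simp add: algebra_simps)
        qed
      qed
      also have "\<dots> = a ^ (d - 1) * (LBINT x:{0..<a}. x * \<psi> x)" by simp
      also have "(LBINT x:{0..<a}. x * \<psi> x) \<le> J"
      proof -
        have U2: "{0..} = {0..<a} \<union> {a..}" using a1 by auto
        have "J = (LBINT x:{0..<a}. x * \<psi> x) + (LBINT x:{a..}. x * \<psi> x)"
          unfolding J_def using a1
          by (subst U2) (intro set_integral_Un set_integrable_subset[OF int1], auto)
        moreover have "0 \<le> (LBINT x:{a..}. x * \<psi> x)" using psi_nonneg a1 by (intro set_int_nonneg) auto
        ultimately show ?thesis by linarith
      qed
      then have "a ^ (d - 1) * (LBINT x:{0..<a}. x * \<psi> x) \<le> a ^ (d - 1) * J" using a1 by (intro mult_left_mono) auto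
      finally show ?thesis .
    qed
    have k4q: "k d \<ge> 4 * q"
    proof -
      have "S d * q \<ge> 8 * q" using ug q by (intro mult_right_mono) auto
      then show ?thesis using dl by simp
    qed
    have qk1: "q \<le> k d" using k4q q(1) by linarith
    have qk2: "0 \<le> real d + C" using k4q kle q(1) by linarith
    have qk: "q \<le> 2 * (real d + C)" using qk1 qk2 kle by (smt (verit))
    have P0N: "0 \<le> P0 d / N d \<and> P0 d / N d \<le> K0 * ((real d + C) / 2^d)"
    proof -
      have P0nn: "0 \<le> P0 d" unfolding P0_def using psi_nonneg by (intro set_int_nonneg) auto
      have pb: "\<psi> b > 0" using psi_pos' a1 by auto
      have Eb: "E d \<ge> 2 ^ d * a ^ d * \<psi> b"
      proof -
        have "exp (F d b) \<le> exp (F d (u d))" using Fincr[of b "u d"] a1 upos by auto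
        then show ?thesis using expF[of b d] Epos a1 unfolding b_def by (simp add: power_mult_distrib)
      qed
      have Nb: "N d \<ge> 2 ^ d * a ^ d * \<psi> b / q"
      proof -
        have "N d = E d * u d / q" unfolding N_def q_def by simp
        moreover have "E d * u d \<ge> E d" using upos Epos by simp
        ultimately show ?thesis using q Eb by (simp add: divide_right_mono)
      qed
      have "P0 d / N d \<le> a ^ (d - 1) * J / (2 ^ d * a ^ d * \<psi> b / q)"
        using P0le Nb P0nn Npos J0 pb a1 q by (intro frac_le) auto
      also have "\<dots> = J * q / (a * \<psi> b * 2 ^ d)"
        using a1 pb q ug by (cases d) (auto simp: field_simps)
      also have "\<dots> \<le> J * (2 * (real d + C)) / (a * \<psi> b * 2 ^ d)"
        using q J0 a1 pb qk by (intro divide_right_mono mult_left_mono) auto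
      also have "\<dots> = K0 * ((real d + C)/2^d)" unfolding K0_def by (simp add: field_simps)
      finally show ?thesis using P0nn Npos by simp
    qed
    have P1N: "0 \<le> P1 d / N d \<and> P1 d / N d \<le> 2 / S d"
    proof -
      have iA: "set_integrable lborel {a..y1 d} (\<lambda>x. x ^ d * \<psi> x)" by (rule intsub) (use a1 in auto)
      have P1HK: "P1 d = integral {a..y1 d} (\<lambda>x. x ^ d * \<psi> x)" "(\<lambda>x. x ^ d * \<psi> x) integrable_on {a..y1 d}"
        unfolding P1_def using set_borel_integral_eq_integral[OF iA] by auto
      define g where "g = (\<lambda>y. E d * y1 d powr (- k d) * y powr k d)"
      have hp: "((\<lambda>y. y powr k d) has_integral (y1 d powr (k d + 1) / (k d + 1))) {0..y1 d}"
        using has_integral_powr_from_0[of "k d" "y1 d"] kbig y1p a1 by auto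
      have hg: "(g has_integral (E d * y1 d powr (- k d) * (y1 d powr (k d + 1) / (k d + 1)))) {0..y1 d}"
        unfolding g_def using has_integral_mult_right[OF hp] by simp
      have gint0: "g integrable_on {0..y1 d}" using hg by blast
      have gint: "g integrable_on {a..y1 d}"
        using integrable_on_subinterval[OF gint0, of a "y1 d"] a1 by auto
      have "P1 d \<le> integral {a..y1 d} g"
        unfolding P1HK(1) using P1HK(2) gint tail1 unfolding g_def by (intro integral_le) auto
      also have "\<dots> \<le> integral {0..y1 d} g"
        using gint gint0 a1 Epos unfolding g_def by (intro integral_subset_le) auto
      also have "\<dots> = E d * y1 d / (k d + 1)"
        using integral_unique[OF hg] y1pos kbig by (simp add: powr_add powr_minus field_simps)
      finally have P1le: "P1 d \<le> E d * y1 d / (k d + 1)" .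
      have P1nn: "0 \<le> P1 d" unfolding P1_def using psi_nonneg a1 by (intro set_int_nonneg) auto
      have "P1 d / N d \<le> (E d * y1 d / (k d + 1)) / N d" using Npos by (intro divide_right_mono[OF P1le]) simp
      also have "\<dots> = y1 d * q / (u d * (k d + 1))" unfolding Nq using Epos(1) q(1) upos(1) kp by (simp add: divide_simps)
      also have "\<dots> \<le> u d * q / (u d * k d)" using y1p upos q kbig
        by (intro frac_le mult_right_mono mult_left_mono) auto
      also have "\<dots> = 2 / S d" unfolding dl(2) using upos(1) q(1) ug(6) by (simp add: divide_simps)
      finally show ?thesis using P1nn Npos by simp
    qed
    have P3N: "0 \<le> P3 d / N d \<and> P3 d / N d \<le> 8 / S d"
    proof -
      have iA: "set_integrable lborel {x1 d..} (\<lambda>x. x ^ d * \<psi> x)" by (rule intsub) (use x1p upos in auto)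
      have P3HK: "P3 d = integral {x1 d..} (\<lambda>x. x ^ d * \<psi> x)" "(\<lambda>x. x ^ d * \<psi> x) integrable_on {x1 d..}"
        unfolding P3_def using set_borel_integral_eq_integral[OF iA] by auto
      define g where "g = (\<lambda>y. E d * x1 d powr k d * y powr (- k d))"
      have hp: "((\<lambda>y. y powr (- k d)) has_integral (- (x1 d powr (- k d + 1)) / (- k d + 1))) {x1 d..}"
        using has_integral_powr_to_inf[of "- k d" "x1 d"] kbig x1p upos by auto
      have hg: "(g has_integral (E d * x1 d powr k d * (- (x1 d powr (- k d + 1)) / (- k d + 1)))) {x1 d..}"
        unfolding g_def using has_integral_mult_right[OF hp] by simp
      have gint: "g integrable_on {x1 d..}" using hg by blast
      have "P3 d \<le> integral {x1 d..} g"
        unfolding P3HK(1) using P3HK(2) gint tail3 unfolding g_def by (intro integral_le) auto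
      also have "\<dots> = E d * x1 d / (k d - 1)"
        using integral_unique[OF hg] powr_val[of "x1 d" "k d" "E d"] x1p upos kbig by simp
      finally have P3le: "P3 d \<le> E d * x1 d / (k d - 1)" .
      have P3nn: "0 \<le> P3 d" unfolding P3_def using psi_nonneg x1p upos by (intro set_int_nonneg) auto
      have "P3 d / N d \<le> (E d * x1 d / (k d - 1)) / N d" using Npos by (intro divide_right_mono[OF P3le]) simp
      also have "\<dots> = x1 d * q / (u d * (k d - 1))" unfolding Nq using Epos(1) q(1) upos(1) kp by (simp add: divide_simps)
      also have "\<dots> \<le> (2 * u d) * q / (u d * (k d / 2))" using x1p upos q kbig
        by (intro frac_le mult_right_mono mult_left_mono) auto
      also have "\<dots> = 8 / S d" unfolding dl(2) using upos(1) q(1) ug(6) by (simp add: divide_simps)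
      finally show ?thesis using P3nn Npos by simp
    qed
    have e1: "y1 d < u d + c d * t \<longleftrightarrow> -S d < t" for t
    proof -
      have "y1 d < u d + c d * t \<longleftrightarrow> c d * (- S d) < c d * t" using y1p(5) cS by (auto simp: algebra_simps)
      also have "\<dots> \<longleftrightarrow> -S d < t" using cpos by (rule mult_less_cancel_left_pos)
      finally show ?thesis .
    qed
    have e2: "u d + c d * t < x1 d \<longleftrightarrow> t < S d" for t
    proof -
      have "u d + c d * t < x1 d \<longleftrightarrow> c d * t < c d * S d" using x1p(3) cS by (auto simp: algebra_simps)
      also have "\<dots> \<longleftrightarrow> t < S d" using cpos by (rule mult_less_cancel_left_pos)
      finally show ?thesis .
    qed
    have P2eq: "P2 d / N d = integral\<^sup>L lborel (s d)"
    proof -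
      have "P2 d = (\<integral>x. indicator {y1 d<..<x1 d} x * (x ^ d * \<psi> x) \<partial>lborel)"
        unfolding P2_def set_lebesgue_integral_def by simp
      also have "\<dots> = \<bar>c d\<bar> *\<^sub>R (\<integral>t. indicator {y1 d<..<x1 d} (u d + c d * t) * ((u d + c d * t) ^ d * \<psi> (u d + c d * t)) \<partial>lborel)"
        by (subst lborel_integral_real_affine[where c="c d" and t="u d"]) (use cpos in auto)
      also have "(\<lambda>t. indicator {y1 d<..<x1 d} (u d + c d * t) * ((u d + c d * t) ^ d * \<psi> (u d + c d * t))) = (\<lambda>t. E d * s d t)"
      proof
        fix t
        show "indicator {y1 d<..<x1 d} (u d + c d * t) * ((u d + c d * t) ^ d * \<psi> (u d + c d * t)) = E d * s d t"
        proof (cases "-S d < t \<and> t < S d")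
          case True
          then have "y1 d < u d + c d * t" using e1[of t] by simp
          then have "u d + c d * t \<ge> 0" using y1p(1) a1(5) by linarith
          then show ?thesis unfolding s_def using Epos True e1 e2 by (simp add: indicator_def)
        next
          case False then show ?thesis unfolding s_def using e1 e2 by (auto simp: indicator_def)
        qed
      qed
      finally have "P2 d = c d * E d * integral\<^sup>L lborel (s d)" using cpos by simp
      then show ?thesis using Npos cpos Epos by simp
    qed
    have central: "\<bar>F d (u d + c d * t) - F d (u d) + t\<^sup>2/2\<bar> \<le> 2*t\<^sup>2/\<omega> d + 2*\<bar>t\<bar>^3/q" if t: "\<bar>t\<bar> < S d" for t
    proof -
      define x where "x = u d + c d * t"
      have xu: "\<bar>x - u d\<bar> \<le> \<delta> d * u d"
      proof -
        have "\<bar>x - u d\<bar> = c d * \<bar>t\<bar>" unfolding x_def using cpos by (simp add: abs_mult)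
        also have "\<dots> \<le> c d * S d" using t cpos by simp
        finally show ?thesis using cS by simp
      qed
      define G where "G = (\<lambda>y. F d y + \<nu> d * (y - u d)\<^sup>2 / (2 * (u d)\<^sup>2))"
      define B where "B = 2*\<nu> d*(x-u d)^2/u d^3 + 2*\<bar>x-u d\<bar>*\<nu> d/((u d)^2*\<omega> d)"
      have "\<bar>G x - G (u d)\<bar> \<le> B * \<bar>x - u d\<bar>"
      proof (rule deriv_bound[where G' = "\<lambda>y. (real d - L y) / y + \<nu> d * (y - u d) / (u d)^2"])
        fix y assume y: "min x (u d) \<le> y" "y \<le> max x (u d)"
        have yb: "\<bar>u d - y\<bar> \<le> \<bar>u d - x\<bar>" using y by (auto simp: min_def max_def split: if_splits)
        have "y \<ge> u d - \<delta> d * u d" using y xu by (auto simp: min_def abs_le_iff split: if_splits)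
        then have ya: "y \<ge> a" "y \<ge> u d / 2" using y1p by auto
        have yu: "\<bar>y - u d\<bar> \<le> \<delta> d * u d" using yb xu by (simp add: abs_minus_commute)
        show "(G has_real_derivative (real d - L y) / y + \<nu> d * (y - u d) / (u d)^2) (at y)"
          unfolding G_def using F_deriv[OF ya(1), of d] upos
          by (auto intro!: derivative_eq_intros simp: field_simps power2_eq_square)
        show "\<bar>(real d - L y) / y + \<nu> d * (y - u d) / (u d)^2\<bar> \<le> B"
          unfolding B_def using cdb[OF upos(1) _ ug(4) ya(2) yb Lloc[OF yu]] ug(5) by simp
      qed
      moreover have "G (u d) = F d (u d)" unfolding G_def by simp
      moreover have "G x = F d x + t\<^sup>2/2" unfolding G_def x_def using q upos
        by (simp add: dl power_mult_distrib power_divide)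
      moreover have "B * \<bar>x - u d\<bar> = 2*t\<^sup>2/\<omega> d + 2*\<bar>t\<bar>^3/q" unfolding B_def x_def using q upos ug
        by (simp add: dl field_simps power2_eq_square power3_eq_cube abs_mult)
      ultimately show ?thesis unfolding x_def by simp
    qed
    have sform: "s d t = exp (F d (u d + c d * t) - F d (u d))" if t: "\<bar>t\<bar> < S d" for t
    proof -
      have "y1 d < u d + c d * t" using e1 t by auto
      then have xa: "u d + c d * t \<ge> a" using y1p by auto
      have "s d t = (u d + c d * t) ^ d * \<psi> (u d + c d * t) / E d" unfolding s_def using t xa a1
        by (simp add: indicator_def abs_less_iff)
      also have "\<dots> = exp (F d (u d + c d * t)) / exp (F d (u d))" using expF[OF xa] Epos by simp
      also have "\<dots> = exp (F d (u d + c d * t) - F d (u d))" by (simp add: exp_diff)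
      finally show ?thesis .
    qed
    have sbound: "\<bar>s d t\<bar> \<le> exp (- t\<^sup>2 / 4)" for t
    proof (cases "\<bar>t\<bar> < S d")
      case True
      have "\<bar>t\<bar> \<le> q / 16" using True S_le by linarith
      then have "F d (u d + c d * t) - F d (u d) \<le> - t\<^sup>2 / 4"
        using quad_bound[OF central[OF True] ug(5) q(1)] by simp
      then show ?thesis using sform[OF True] by simp
    next
      case False then have "s d t = 0" unfolding s_def by (auto simp: indicator_def abs_less_iff)
      then show ?thesis by simp
    qed
    show ?thesis using decomp P0N P1N P3N P2eq sbound sform central by (auto simp: q_def)
  qed
  have lim0: "(\<lambda>d. P0 d / N d) \<longlonglongrightarrow> 0"
  proof (rule tendsto_sandwich[where f="\<lambda>_. 0" and h="\<lambda>d. K0 * ((real d + C) / 2^d)"])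
    show "eventually (\<lambda>d. 0 \<le> P0 d / N d) sequentially" using ev_good by eventually_elim (use per_d in blast)
    show "eventually (\<lambda>d. P0 d / N d \<le> K0 * ((real d + C) / 2^d)) sequentially"
      using ev_good by eventually_elim (use per_d in blast)
    show "((\<lambda>_. 0) \<longlongrightarrow> 0) sequentially" by simp
    have "((\<lambda>d::nat. (real d + C) / 2^d) \<longlongrightarrow> 0) sequentially" by real_asymp
    from tendsto_mult[OF tendsto_const[of K0] this]
    show "((\<lambda>d. K0 * ((real d + C) / 2^d)) \<longlongrightarrow> 0) sequentially" by simp
  qed
  have Sinv: "(\<lambda>d. inverse (S d)) \<longlonglongrightarrow> 0" using tendsto_inverse_0_at_top[OF S_top] .
  have S2: "(\<lambda>d. 2 / S d) \<longlonglongrightarrow> 0" using tendsto_mult[OF tendsto_const[of 2] Sinv] by (simp add: divide_inverse)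
  have S8: "(\<lambda>d. 8 / S d) \<longlonglongrightarrow> 0" using tendsto_mult[OF tendsto_const[of 8] Sinv] by (simp add: divide_inverse)
  have lim1: "(\<lambda>d. P1 d / N d) \<longlonglongrightarrow> 0"
  proof (rule tendsto_sandwich[where f="\<lambda>_. 0" and h="\<lambda>d. 2 / S d"])
    show "eventually (\<lambda>d. 0 \<le> P1 d / N d) sequentially" using ev_good by eventually_elim (use per_d in blast)
    show "eventually (\<lambda>d. P1 d / N d \<le> 2 / S d) sequentially"
      using ev_good by eventually_elim (use per_d in blast)
  qed (use S2 in auto)
  have lim3: "(\<lambda>d. P3 d / N d) \<longlonglongrightarrow> 0"
  proof (rule tendsto_sandwich[where f="\<lambda>_. 0" and h="\<lambda>d. 8 / S d"])
    show "eventually (\<lambda>d. 0 \<le> P3 d / N d) sequentially" using ev_good by eventually_elim (use per_d in blast)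
    show "eventually (\<lambda>d. P3 d / N d \<le> 8 / S d) sequentially"
      using ev_good by eventually_elim (use per_d in blast)
  qed (use S8 in auto)
  have meas_s: "s d \<in> borel_measurable lborel" for d
  proof -
    have g[measurable]: "(\<lambda>x. indicator {0..} x * \<psi> x) \<in> borel_measurable borel"
      using psi_meas unfolding set_borel_measurable_def by simp
    show ?thesis unfolding s_def by measurable
  qed
  have pw: "(\<lambda>d. s d t) \<longlonglongrightarrow> exp (- t\<^sup>2 / 2)" for t
  proof -
    have "eventually (\<lambda>d. \<bar>t\<bar> + 1 \<le> S d) sequentially" using S_top by (simp add: filterlim_at_top)
    with ev_good have evt: "eventually (\<lambda>d. good d \<and> \<bar>t\<bar> < S d) sequentially"
      by eventually_elim auto
    define Fd where "Fd = (\<lambda>d. F d (u d + c d * t) - F d (u d))"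
    have e: "(\<lambda>d. 2*t\<^sup>2/\<omega> d + 2*\<bar>t\<bar>^3/sqrt (\<nu> d)) \<longlonglongrightarrow> 0"
    proof -
      have i1: "(\<lambda>d. inverse (\<omega> d)) \<longlonglongrightarrow> 0" using tendsto_inverse_0_at_top[OF omega_lim] .
      have i2: "(\<lambda>d. inverse (sqrt (\<nu> d))) \<longlonglongrightarrow> 0"
        using tendsto_inverse_0_at_top[OF filterlim_compose[OF sqrt_at_top nu_lim]] by (simp add: o_def)
      have "(\<lambda>d. 2*t\<^sup>2 * inverse (\<omega> d) + 2*\<bar>t\<bar>^3 * inverse (sqrt (\<nu> d))) \<longlonglongrightarrow> 2*t\<^sup>2 * 0 + 2*\<bar>t\<bar>^3 * 0"
        by (intro tendsto_intros i1 i2)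
      then show ?thesis by (simp add: divide_inverse)
    qed
    have "(\<lambda>d. Fd d + t\<^sup>2/2) \<longlonglongrightarrow> 0"
    proof (rule Lim_null_comparison[OF _ e])
      show "eventually (\<lambda>d. norm (Fd d + t\<^sup>2/2) \<le> 2*t\<^sup>2/\<omega> d + 2*\<bar>t\<bar>^3/sqrt (\<nu> d)) sequentially"
        using evt by eventually_elim (use per_d in \<open>auto simp: Fd_def\<close>)
    qed
    from tendsto_add[OF this tendsto_const[of "- t\<^sup>2/2"]]
    have "Fd \<longlonglongrightarrow> - t\<^sup>2/2" by simp
    then have "(\<lambda>d. exp (Fd d)) \<longlonglongrightarrow> exp (- t\<^sup>2/2)" by (rule tendsto_exp)
    moreover have "eventually (\<lambda>d. exp (Fd d) = s d t) sequentially"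
      using evt by eventually_elim (use per_d in \<open>auto simp: Fd_def\<close>)
    ultimately show ?thesis by (simp add: Lim_transform_eventually)
  qed
  have "(\<lambda>d. integral\<^sup>L lborel (s d)) \<longlonglongrightarrow> integral\<^sup>L lborel (\<lambda>t. exp (- t\<^sup>2 / 2))"
  proof (rule dom_conv_seq[where w="\<lambda>t. exp (- t\<^sup>2 / 4)"])
    show "(\<lambda>t::real. exp (- t\<^sup>2 / 2)) \<in> borel_measurable lborel" by measurable
    show "s i \<in> borel_measurable lborel" for i by (rule meas_s)
    show "integrable lborel (\<lambda>t::real. exp (- t\<^sup>2 / 4))" by (rule gauss_int4)
    show "(\<lambda>i. s i x) \<longlonglongrightarrow> exp (- x\<^sup>2 / 2)" for x by (rule pw)
    show "eventually (\<lambda>i. \<forall>x. \<bar>s i x\<bar> \<le> exp (- x\<^sup>2 / 4)) sequentially"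
      using ev_good by eventually_elim (use per_d in blast)
  qed
  then have lim2a: "(\<lambda>d. integral\<^sup>L lborel (s d)) \<longlonglongrightarrow> sqrt (2*pi)" using gauss_int by simp
  have lim2: "(\<lambda>d. P2 d / N d) \<longlonglongrightarrow> sqrt (2*pi)"
  proof (rule Lim_transform_eventually[OF lim2a])
    show "eventually (\<lambda>d. integral\<^sup>L lborel (s d) = P2 d / N d) sequentially"
      using ev_good by eventually_elim (use per_d in auto)
  qed
  define T where "T = (\<lambda>d. sqrt (2 * pi / \<nu> d) * u d ^ (d + 1) * \<psi> (u d))"
  have ratio: "eventually (\<lambda>d. (P0 d / N d + P1 d / N d + P2 d / N d + P3 d / N d) / sqrt (2*pi) = I d / T d) sequentially"
    using ev_good
  proof eventually_elim
    case (elim d)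
    have up: "u d > 0" "\<nu> d > 0" using elim a1 unfolding good_def by auto
    have "\<psi> (u d) > 0" using psi_pos' elim a1 unfolding good_def by auto
    then have Np: "N d > 0" unfolding N_def E_def using up by simp
    have TN: "T d = sqrt (2*pi) * N d" unfolding T_def N_def E_def using up
      by (simp add: real_sqrt_divide field_simps)
    have dec: "I d = P0 d + P1 d + P2 d + P3 d" using per_d[OF elim] by blast
    show ?case unfolding TN dec using Np by (simp add: field_simps)
  qed
  have "(\<lambda>d. (P0 d / N d + P1 d / N d + P2 d / N d + P3 d / N d) / sqrt (2*pi)) \<longlonglongrightarrow> (0 + 0 + sqrt (2*pi) + 0) / sqrt (2*pi)"
    by (intro tendsto_intros lim0 lim1 lim2 lim3) simp
  then have "(\<lambda>d. (P0 d / N d + P1 d / N d + P2 d / N d + P3 d / N d) / sqrt (2*pi)) \<longlonglongrightarrow> 1" by simp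
  then have "(\<lambda>d. I d / T d) \<longlonglongrightarrow> 1" by (rule Lim_transform_eventually[OF _ ratio])
  then have "I \<sim>[sequentially] T" by (rule asymp_equivI')
  then show ?thesis unfolding I_def T_def .
qed

end
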